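(* In the setting described in the context, let $i\in\mathcal V$ satisfy $\sigma_i^2\ge\sigma_j^2$ for every $j\in\mathcal V$, and let $z_{-i}=(z_j)_{j\ne i}$ be such that $\mathcal S(z_{-i})=\{j\ne i: z_j=1\}\ne\emptyset$. Then the following are equivalent: (i) $1\in\mathcal B_i(z_{-i})$; (ii) $\mathcal B_i(z_{-i})=[0,1]$; (iii) for every $z_i\in[0,1)$, writing $z=(z_i,z_{-i})$, there is exactly one node $j\in\mathcal S(z_{-i})$ reachable from $i$ (i.e. to which there is a path from $i$) in the graph $\mathcal G_{W(z)}$, and for this node $\sigma_i^2=\sigma_j^2$.
   Context: Let $n\ge2$ and $\mathcal V=\{1,\dots,n\}$. For a nonnegative $n\times n$ matrix $M$, $\mathcal G_M$ is the directed graph on $\mathcal V$ with edge $(k,l)$ iff $M_{kl}>0$. Let $P$ be a row-stochastic, irreducible, aperiodic matrix ($\mathcal G_P$ strongly connected with gcd of cycle lengths $1$). For $z\in[0,1]^n$, $W(z)=(I-[z])P+[z]$ ($[z]$ the diagonal matrix with diagonal $z$) and $H(z)=\lim_{t\to\infty}W(z)^t$ (the limit exists and is row-stochastic). Let $\sigma_1^2,\dots,\sigma_n^2>0$. Agent $i$'s cost is $\upsilon_i(z)=\sum_jH_{ij}(z)^2\sigma_j^2$, written $\upsilon_i(z_i,z_{-i})$, and her best response set is $\mathcal B_i(z_{-i})=\arg\min_{z_i\in[0,1]}\upsilon_i(z_i,z_{-i})$. *)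

theory Defs
  imports "HOL-Analysis.Analysis"
begin

text \<open>Matrices over a finite index type 'n (playing the role of V = {1..n}).\<close>

primrec matpow :: "real^'n^'n \<Rightarrow> nat \<Rightarrow> real^'n^'n" where
  "matpow M 0 = mat 1"
| "matpow M (Suc t) = matpow M t ** M"

definition diagm :: "real^'n \<Rightarrow> real^'n^'n" where
  "diagm z = (\<chi> k l. if k = l then z $ k else 0)"

definition graph_of :: "real^'n^'n \<Rightarrow> ('n \<times> 'n) set" where
  "graph_of M = {(k, l). M $ k $ l > 0}"

definition row_stochastic :: "real^'n^'n \<Rightarrow> bool" where
  "row_stochastic M \<longleftrightarrow> (\<forall>k l. 0 \<le> M $ k $ l) \<and> (\<forall>k. (\<Sum>l\<in>UNIV. M $ k $ l) = 1)"

definition irreducible_mat :: "real^'n^'n \<Rightarrow> bool" where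
  "irreducible_mat M \<longleftrightarrow> (\<forall>k l. (k, l) \<in> (graph_of M)\<^sup>+)"

definition aperiodic_mat :: "real^'n^'n \<Rightarrow> bool" where
  "aperiodic_mat M \<longleftrightarrow> Gcd {m::nat. m > 0 \<and> (\<exists>k. (k, k) \<in> graph_of M ^^ m)} = 1"

definition Wm :: "real^'n^'n \<Rightarrow> real^'n \<Rightarrow> real^'n^'n" where
  "Wm P z = (mat 1 - diagm z) ** P + diagm z"

definition Hm :: "real^'n^'n \<Rightarrow> real^'n \<Rightarrow> real^'n^'n" where
  "Hm P z = lim (\<lambda>t. matpow (Wm P z) t)"

definition cost :: "real^'n^'n \<Rightarrow> real^'n \<Rightarrow> 'n \<Rightarrow> real^'n \<Rightarrow> real" where
  "cost P sigma2 i z = (\<Sum>j\<in>UNIV. (Hm P z $ i $ j)\<^sup>2 * sigma2 $ j)"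

text \<open>Best response set of agent i to z_{-i} (the i-th entry of z is ignored).\<close>
definition vupd :: "real^'n \<Rightarrow> 'n \<Rightarrow> real \<Rightarrow> real^'n" where
  "vupd z i x = (\<chi> k. if k = i then x else z $ k)"

definition best_response :: "real^'n^'n \<Rightarrow> real^'n \<Rightarrow> 'n \<Rightarrow> real^'n \<Rightarrow> real set" where
  "best_response P sigma2 i z =
     {x \<in> {0..1}. \<forall>y \<in> {0..1}.
        cost P sigma2 i (vupd z i x) \<le> cost P sigma2 i (vupd z i y)}"

definition stubborn_set :: "'n \<Rightarrow> real^'n \<Rightarrow> 'n set" where
  "stubborn_set i z = {j. j \<noteq> i \<and> z $ j = 1}"

end

theory Submission
  imports Defs
begin


lemma mm_entry: "(A ** B) $ k $ l = (\<Sum>m\<in>UNIV. A $ k $ m * B $ m $ l)"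
  by (simp add: matrix_matrix_mult_def)

lemma mv_entry: "(A *v x) $ k = (\<Sum>m\<in>UNIV. A $ k $ m * x $ m)"
  by (simp add: matrix_vector_mult_def)

lemma mat1_entry: "(mat 1 :: real^'n^'n) $ k $ l = (if k = l then 1 else 0)"
  by (simp add: mat_def)

lemma matpow_add: "matpow W (s + t) = matpow W s ** matpow W t"
  by (induction t) (simp_all add: matrix_mul_assoc)

lemma matpow_Suc_entry: "matpow W (Suc t) $ k $ l = (\<Sum>m\<in>UNIV. matpow W t $ k $ m * W $ m $ l)"
  by (simp add: mm_entry)

lemma Wm_entry: "Wm P z $ k $ l = (1 - z $ k) * P $ k $ l + (if k = l then z $ k else 0)"
proof -
  have "Wm P z $ k $ l = (\<Sum>m\<in>UNIV. (if k = m then 1 - z $ k else 0) * P $ m $ l) + (if k = l then z $ k else 0)"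
    unfolding Wm_def by (simp add: mm_entry diagm_def mat_def) (intro sum.cong; simp)
  also have "(\<Sum>m\<in>UNIV. (if k = m then 1 - z $ k else 0) * P $ m $ l) = (1 - z $ k) * P $ k $ l"
  proof -
    have "(\<Sum>m\<in>UNIV. (if k = m then 1 - z $ k else 0) * P $ m $ l) = (\<Sum>m\<in>UNIV. if k = m then (1 - z $ k) * P $ m $ l else 0)"
      by (intro sum.cong) auto
    then show ?thesis by simp
  qed
  finally show ?thesis .
qed

locale absorb =
  fixes W :: "real^'n^'n" and A :: "'n set"
  assumes nonneg: "\<And>k l. 0 \<le> W $ k $ l"
    and rows: "\<And>k. (\<Sum>l\<in>UNIV. W $ k $ l) = 1"
    and arow: "\<And>a l. a \<in> A \<Longrightarrow> W $ a $ l = (if l = a then 1 else 0)"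
    and reach: "\<And>k. \<exists>a\<in>A. (k, a) \<in> (graph_of W)\<^sup>*"
begin

lemma pw_nonneg: "0 \<le> matpow W t $ k $ l"
proof (induction t arbitrary: l)
  case 0 then show ?case by (simp add: mat1_entry)
next
  case (Suc t) then show ?case
    by (simp add: mm_entry sum_nonneg nonneg)
qed

lemma pw_rows: "(\<Sum>l\<in>UNIV. matpow W t $ k $ l) = 1"
proof (induction t)
  case 0 then show ?case by (simp add: mat1_entry)
next
  case (Suc t)
  have "(\<Sum>l\<in>UNIV. matpow W (Suc t) $ k $ l) = (\<Sum>l\<in>UNIV. \<Sum>m\<in>UNIV. matpow W t $ k $ m * W $ m $ l)"
    by (simp add: mm_entry)
  also have "\<dots> = (\<Sum>m\<in>UNIV. \<Sum>l\<in>UNIV. matpow W t $ k $ m * W $ m $ l)"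
    by (rule sum.swap)
  also have "\<dots> = (\<Sum>m\<in>UNIV. matpow W t $ k $ m * (\<Sum>l\<in>UNIV. W $ m $ l))"
    by (simp add: sum_distrib_left)
  also have "\<dots> = 1" using Suc by (simp add: rows)
  finally show ?case .
qed

lemma pw_arow: "a \<in> A \<Longrightarrow> matpow W t $ a $ l = (if l = a then 1 else 0)"
proof (induction t arbitrary: l)
  case 0 then show ?case by (simp add: mat1_entry)
next
  case (Suc t)
  have "matpow W (Suc t) $ a $ l = (\<Sum>m\<in>UNIV. (if m = a then W $ a $ l else 0))"
    unfolding matpow.simps mm_entry using Suc by (intro sum.cong) auto
  then show ?case using Suc.prems by (simp add: arow)
qed

lemma pw_le1: "matpow W t $ k $ l \<le> 1"
proof -
  have "matpow W t $ k $ l \<le> (\<Sum>m\<in>UNIV. matpow W t $ k $ m)"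
    by (rule member_le_sum) (auto simp: pw_nonneg)
  then show ?thesis by (simp add: pw_rows)
qed

lemma pw_mono: "a \<in> A \<Longrightarrow> matpow W t $ k $ a \<le> matpow W (Suc t) $ k $ a"
proof -
  assume a: "a \<in> A"
  have "matpow W t $ k $ a * W $ a $ a \<le> (\<Sum>m\<in>UNIV. matpow W t $ k $ m * W $ m $ a)"
    by (rule member_le_sum) (auto simp: pw_nonneg nonneg)
  then show ?thesis using a by (simp add: mm_entry arow)
qed

lemma pw_incseq: "a \<in> A \<Longrightarrow> incseq (\<lambda>t. matpow W t $ k $ a)"
  by (rule incseq_SucI) (rule pw_mono)

lemma reach_pos: "(k, l) \<in> (graph_of W)\<^sup>* \<Longrightarrow> \<exists>t. matpow W t $ k $ l > 0"
proof (induction rule: rtrancl_induct)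
  case base
  show ?case by (rule exI[of _ 0]) (simp add: mat1_entry)
next
  case (step l l')
  then obtain t where t: "matpow W t $ k $ l > 0" by blast
  have e: "W $ l $ l' > 0" using step(2) by (simp add: graph_of_def)
  have "matpow W t $ k $ l * W $ l $ l' \<le> (\<Sum>m\<in>UNIV. matpow W t $ k $ m * W $ m $ l')"
    by (rule member_le_sum) (auto simp: pw_nonneg nonneg)
  moreover have "matpow W t $ k $ l * W $ l $ l' > 0" using t e by simp
  ultimately show ?case by (intro exI[of _ "Suc t"]) (simp add: mm_entry)
qed

lemma pos_reach: "matpow W t $ k $ l > 0 \<Longrightarrow> (k, l) \<in> (graph_of W)\<^sup>*"
proof (induction t arbitrary: l)
  case 0 then show ?case by (simp add: mat1_entry split: if_splits)
next
  case (Suc t)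
  have "\<exists>m. matpow W t $ k $ m * W $ m $ l > 0"
  proof (rule ccontr)
    assume "\<not> ?thesis"
    then have "(\<Sum>m\<in>UNIV. matpow W t $ k $ m * W $ m $ l) \<le> 0"
      by (intro sum_nonpos) (simp add: not_less)
    with Suc.prems show False by (simp add: mm_entry)
  qed
  then obtain m where "matpow W t $ k $ m * W $ m $ l > 0" by blast
  then have "matpow W t $ k $ m > 0" "W $ m $ l > 0"
    using pw_nonneg[of t k m] nonneg[of m l] by (auto simp: zero_less_mult_iff)
  then show ?case using Suc.IH by (auto simp: graph_of_def intro: rtrancl_into_rtrancl)
qed


definition nA :: "real^'n" where "nA = (\<chi> l. if l \<in> A then 0 else 1)"
definition mv :: "nat \<Rightarrow> real^'n" where "mv t = matpow W t *v nA"

lemma mv_ent: "mv t $ k = (\<Sum>l\<in>UNIV. matpow W t $ k $ l * (if l \<in> A then 0 else 1))"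
  by (simp add: mv_def nA_def mv_entry)

lemma mv_nonneg: "0 \<le> mv t $ k"
  unfolding mv_ent by (intro sum_nonneg) (simp add: pw_nonneg)

lemma mv_A: "a \<in> A \<Longrightarrow> mv t $ a = 0"
  unfolding mv_ent by (intro sum.neutral) (simp add: pw_arow)

lemma mv_add: "mv (s + t) = matpow W s *v mv t"
  by (simp add: mv_def matpow_add matrix_vector_mul_assoc)

lemma mv_one: "mv 1 = W *v nA"
  by (simp add: mv_def)

lemma WnA: "(W *v nA) $ l \<le> nA $ l"
proof (cases "l \<in> A")
  case True
  have "(W *v nA) $ l = mv 1 $ l" by (simp only: mv_one)
  also have "\<dots> = 0" using True by (rule mv_A)
  finally show ?thesis using True by (simp add: nA_def)
next
  case False
  have "(W *v nA) $ l = (\<Sum>m\<in>UNIV. W $ l $ m * (if m \<in> A then 0 else 1))"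
    by (simp add: mv_entry nA_def)
  also have "\<dots> \<le> (\<Sum>m\<in>UNIV. W $ l $ m)"
    by (intro sum_mono) (simp add: nonneg)
  also have "\<dots> = 1" by (rule rows)
  finally show ?thesis using False by (simp add: nA_def)
qed

lemma mv_dec: "mv (Suc t) $ k \<le> mv t $ k"
proof -
  have "mv (Suc t) $ k = (matpow W t *v (W *v nA)) $ k"
    by (simp only: Suc_eq_plus1 mv_add mv_one)
  also have "\<dots> = (\<Sum>l\<in>UNIV. matpow W t $ k $ l * (W *v nA) $ l)"
    by (simp only: mv_entry)
  also have "\<dots> \<le> (\<Sum>l\<in>UNIV. matpow W t $ k $ l * nA $ l)"
    by (intro sum_mono mult_left_mono WnA pw_nonneg)
  also have "\<dots> = mv t $ k" by (simp add: mv_def mv_entry)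
  finally show ?thesis .
qed

lemma entry_le_mv: "l \<notin> A \<Longrightarrow> matpow W t $ k $ l \<le> mv t $ k"
  unfolding mv_ent
  by (rule order_trans[OF _ member_le_sum[of l]]) (auto simp: pw_nonneg)

lemma mv_lt1: "a \<in> A \<Longrightarrow> matpow W t $ k $ a > 0 \<Longrightarrow> mv t $ k < 1"
proof -
  assume a: "a \<in> A" and p: "matpow W t $ k $ a > 0"
  have d: "(\<Sum>l\<in>UNIV. matpow W t $ k $ l * (if l = a then 1 else 0)) = matpow W t $ k $ a"
  proof -
    have "(\<Sum>l\<in>UNIV. matpow W t $ k $ l * (if l = a then 1 else 0)) = (\<Sum>l\<in>UNIV. if l = a then matpow W t $ k $ a else 0)"
      by (intro sum.cong) auto
    then show ?thesis by simp
  qed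
  have "mv t $ k + matpow W t $ k $ a = (\<Sum>l\<in>UNIV. matpow W t $ k $ l * ((if l \<in> A then 0 else 1) + (if l = a then 1 else 0)))"
    by (simp add: mv_ent distrib_left sum.distrib d)
  also have "\<dots> \<le> (\<Sum>l\<in>UNIV. matpow W t $ k $ l)"
    using a by (intro sum_mono) (auto simp: pw_nonneg)
  also have "\<dots> = 1" by (rule pw_rows)
  finally show ?thesis using p by simp
qed

lemma mv_conv: "\<exists>L. (\<lambda>t. mv t $ k) \<longlonglongrightarrow> L"
proof -
  have "decseq (\<lambda>t. mv t $ k)" by (rule decseq_SucI) (rule mv_dec)
  moreover have "\<forall>t. 0 \<le> mv t $ k" using mv_nonneg by simp
  ultimately obtain L where "(\<lambda>t. mv t $ k) \<longlonglongrightarrow> L" "\<forall>t. L \<le> mv t $ k"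
    by (rule decseq_convergent)
  then show ?thesis by blast
qed

lemma mv_lim0: "(\<lambda>t. mv t $ k) \<longlonglongrightarrow> 0"
proof -
  define mi where "mi k = lim (\<lambda>t. mv t $ k)" for k
  have mi: "(\<lambda>t. mv t $ k) \<longlonglongrightarrow> mi k" for k
    unfolding mi_def using mv_conv[of k] convergent_LIMSEQ_iff convergent_def by blast
  have mi_nn: "0 \<le> mi k" for k
    by (rule LIMSEQ_le_const[OF mi]) (simp add: mv_nonneg)
  have mi_A: "l \<in> A \<Longrightarrow> mi l = 0" for l
    using mi[of l] by (simp add: mv_A LIMSEQ_const_iff)
  define M where "M = Max (range mi)"
  have M_ge: "mi k \<le> M" for k unfolding M_def by (rule Max_ge) auto
  have "M \<in> range mi" unfolding M_def by (rule Max_in) auto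
  then obtain k0 where k0: "mi k0 = M" by auto
  obtain a where a: "a \<in> A" "(k0, a) \<in> (graph_of W)\<^sup>*" using reach by blast
  obtain t0 where t0: "matpow W t0 $ k0 $ a > 0" using reach_pos[OF a(2)] by blast
  have l1: "(\<lambda>t. mv (t + t0) $ k0) \<longlonglongrightarrow> mi k0"
    using LIMSEQ_ignore_initial_segment[OF mi[of k0], of t0] by simp
  have eq: "mv (t + t0) $ k0 = (\<Sum>l\<in>UNIV. matpow W t0 $ k0 $ l * mv t $ l)" for t
    using mv_add[of t0 t] by (simp add: add.commute mv_entry)
  have l2: "(\<lambda>t. mv (t + t0) $ k0) \<longlonglongrightarrow> (\<Sum>l\<in>UNIV. matpow W t0 $ k0 $ l * mi l)"
    unfolding eq by (intro tendsto_intros mi)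
  have "M = (\<Sum>l\<in>UNIV. matpow W t0 $ k0 $ l * mi l)"
    using LIMSEQ_unique[OF l1 l2] k0 by simp
  also have "\<dots> \<le> (\<Sum>l\<in>UNIV. matpow W t0 $ k0 $ l * (if l \<in> A then 0 else 1) * M)"
    by (intro sum_mono) (auto simp: mi_A M_ge pw_nonneg mult_left_mono)
  also have "\<dots> = mv t0 $ k0 * M"
    by (simp add: mv_ent sum_distrib_right)
  finally have "M \<le> mv t0 $ k0 * M" .
  moreover have "mv t0 $ k0 < 1" by (rule mv_lt1[OF a(1) t0])
  moreover have "0 \<le> M" using mi_nn[of k0] k0 by simp
  ultimately have "M = 0"
    by (smt (verit) mult_less_cancel_right2)
  then have "mi k = 0" using M_ge[of k] mi_nn[of k] by simp
  then show ?thesis using mi[of k] by simp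
qed

lemma entry_conv: "\<exists>L. (\<lambda>t. matpow W t $ k $ l) \<longlonglongrightarrow> L"
proof (cases "l \<in> A")
  case True
  then have "incseq (\<lambda>t. matpow W t $ k $ l)" by (rule pw_incseq)
  moreover have "\<forall>t. matpow W t $ k $ l \<le> 1" using pw_le1 by simp
  ultimately obtain L where "(\<lambda>t. matpow W t $ k $ l) \<longlonglongrightarrow> L" "\<forall>t. matpow W t $ k $ l \<le> L"
    by (rule incseq_convergent)
  then show ?thesis by blast
next
  case False
  have "(\<lambda>t. matpow W t $ k $ l) \<longlonglongrightarrow> 0"
    by (rule tendsto_sandwich[OF _ _ tendsto_const mv_lim0[of k]])
       (auto simp: pw_nonneg entry_le_mv False)
  then show ?thesis by blast
qed

definition Lm :: "real^'n^'n" where "Lm = (\<chi> k l. lim (\<lambda>t. matpow W t $ k $ l))"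

lemma Lm_ent: "(\<lambda>t. matpow W t $ k $ l) \<longlonglongrightarrow> Lm $ k $ l"
  unfolding Lm_def using entry_conv[of k l] convergent_LIMSEQ_iff convergent_def by auto

lemma Lm_lim: "matpow W \<longlonglongrightarrow> Lm"
  by (intro vec_tendstoI Lm_ent)

lemma Lm_nonneg: "0 \<le> Lm $ k $ l"
  by (rule LIMSEQ_le_const[OF Lm_ent]) (simp add: pw_nonneg)

lemma Lm_rows: "(\<Sum>l\<in>UNIV. Lm $ k $ l) = 1"
proof -
  have "(\<lambda>t. \<Sum>l\<in>UNIV. matpow W t $ k $ l) \<longlonglongrightarrow> (\<Sum>l\<in>UNIV. Lm $ k $ l)"
    by (intro tendsto_intros Lm_ent)
  then show ?thesis by (simp add: pw_rows LIMSEQ_const_iff)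
qed

lemma Lm_notA: "l \<notin> A \<Longrightarrow> Lm $ k $ l = 0"
proof -
  assume l: "l \<notin> A"
  have "(\<lambda>t. matpow W t $ k $ l) \<longlonglongrightarrow> 0"
    by (rule tendsto_sandwich[OF _ _ tendsto_const mv_lim0[of k]])
       (auto simp: pw_nonneg entry_le_mv l)
  then show ?thesis using LIMSEQ_unique Lm_ent by blast
qed

lemma Lm_Arow: "a \<in> A \<Longrightarrow> Lm $ a $ l = (if l = a then 1 else 0)"
  using Lm_ent[of a l] by (simp add: pw_arow LIMSEQ_const_iff)

lemma Lm_pos: "a \<in> A \<Longrightarrow> (Lm $ k $ a > 0 \<longleftrightarrow> (k, a) \<in> (graph_of W)\<^sup>*)"
proof
  assume "Lm $ k $ a > 0"
  show "(k, a) \<in> (graph_of W)\<^sup>*"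
  proof (rule ccontr)
    assume nr: "(k, a) \<notin> (graph_of W)\<^sup>*"
    have "matpow W t $ k $ a = 0" for t
      using pos_reach[of t k a] nr pw_nonneg[of t k a] by fastforce
    then have "Lm $ k $ a = 0" using Lm_ent[of k a] by (simp add: LIMSEQ_const_iff)
    with \<open>Lm $ k $ a > 0\<close> show False by simp
  qed
next
  assume a: "a \<in> A" and r: "(k, a) \<in> (graph_of W)\<^sup>*"
  obtain t where t: "matpow W t $ k $ a > 0" using reach_pos[OF r] by blast
  have "matpow W t $ k $ a \<le> Lm $ k $ a"
    by (rule incseq_le[OF pw_incseq[OF a] Lm_ent])
  with t show "Lm $ k $ a > 0" by simp
qed

end



lemma reach_W:
  assumes zr: "\<forall>k. 0 \<le> z $ k \<and> z $ k \<le> 1" and stoch: "row_stochastic P"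
  shows "(k, a0) \<in> (graph_of P)\<^sup>* \<Longrightarrow> z $ a0 = 1 \<Longrightarrow> \<exists>a. z $ a = 1 \<and> (k, a) \<in> (graph_of (Wm P z))\<^sup>*"
proof (induction rule: converse_rtrancl_induct)
  case base then show ?case by blast
next
  case (step k k')
  show ?case
  proof (cases "z $ k = 1")
    case True then show ?thesis by blast
  next
    case False
    then have "z $ k < 1" using zr by (meson less_le)
    moreover have "P $ k $ k' > 0" using step(1) by (simp add: graph_of_def)
    ultimately have "(1 - z $ k) * P $ k $ k' > 0" by simp
    moreover have "0 \<le> (if k = k' then z $ k else 0)" using zr by simp
    ultimately have "Wm P z $ k $ k' > 0" by (simp add: Wm_entry)
    then have e: "(k, k') \<in> graph_of (Wm P z)" by (simp add: graph_of_def)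
    from step(3)[OF step(4)] obtain a where "z $ a = 1" "(k', a) \<in> (graph_of (Wm P z))\<^sup>*" by blast
    then show ?thesis using e by (meson converse_rtrancl_into_rtrancl)
  qed
qed

lemma Hm_props:
  fixes P :: "real^'n^'n" and z :: "real^'n"
  assumes stoch: "row_stochastic P" and irred: "irreducible_mat P"
    and zr: "\<forall>k. 0 \<le> z $ k \<and> z $ k \<le> 1"
    and ne: "{k. z $ k = 1} \<noteq> {}"
  shows "(\<forall>k l. 0 \<le> Hm P z $ k $ l) \<and> (\<forall>k. (\<Sum>l\<in>UNIV. Hm P z $ k $ l) = 1)
     \<and> (\<forall>k l. z $ l \<noteq> 1 \<longrightarrow> Hm P z $ k $ l = 0)
     \<and> (\<forall>k a. z $ a = 1 \<longrightarrow> Hm P z $ a $ k = (if k = a then 1 else 0))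
     \<and> (\<forall>k a. z $ a = 1 \<longrightarrow> (Hm P z $ k $ a > 0 \<longleftrightarrow> (k, a) \<in> (graph_of (Wm P z))\<^sup>*))"
proof -
  interpret absorb "Wm P z" "{k. z $ k = 1}"
  proof
    fix k l
    show "0 \<le> Wm P z $ k $ l"
      using zr stoch unfolding row_stochastic_def by (simp add: Wm_entry)
  next
    fix k
    have "(\<Sum>l\<in>UNIV. Wm P z $ k $ l) = (1 - z $ k) * (\<Sum>l\<in>UNIV. P $ k $ l) + (\<Sum>l\<in>UNIV. (if k = l then z $ k else 0))"
      by (simp add: Wm_entry sum.distrib sum_distrib_left)
    then show "(\<Sum>l\<in>UNIV. Wm P z $ k $ l) = 1"
      using stoch unfolding row_stochastic_def by simp
  next
    fix a l
    assume "a \<in> {k. z $ k = 1}"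
    then show "Wm P z $ a $ l = (if l = a then 1 else 0)" by (simp add: Wm_entry)
  next
    fix k
    obtain a0 where a0: "z $ a0 = 1" using ne by blast
    have "(k, a0) \<in> (graph_of P)\<^sup>*"
      using irred unfolding irreducible_mat_def by (meson trancl_into_rtrancl)
    then show "\<exists>a\<in>{k. z $ k = 1}. (k, a) \<in> (graph_of (Wm P z))\<^sup>*"
      using reach_W[OF zr stoch _ a0] by blast
  qed
  have H: "Hm P z = Lm" unfolding Hm_def using Lm_lim by (rule limI)
  show ?thesis unfolding H
    using Lm_nonneg Lm_rows Lm_notA Lm_Arow Lm_pos by auto
qed

lemma quad:
  fixes h s :: "'n::finite \<Rightarrow> real" and R :: "'n set"
  assumes hnn: "\<forall>j. 0 \<le> h j" and hs: "(\<Sum>j\<in>UNIV. h j) = 1" and hR: "\<forall>j. h j > 0 \<longleftrightarrow> j \<in> R"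
    and spos: "\<forall>j. s j > 0" and smax: "\<forall>j. s j \<le> s i"
  shows "(\<Sum>j\<in>UNIV. (h j)\<^sup>2 * s j) \<le> s i"
   and "(\<Sum>j\<in>UNIV. (h j)\<^sup>2 * s j) \<ge> s i \<longleftrightarrow> ((\<exists>!j. j \<in> R) \<and> (\<forall>j. j \<in> R \<longrightarrow> s i = s j))"
proof -
  have hle: "h j \<le> 1" for j
  proof -
    have "h j \<le> (\<Sum>j\<in>UNIV. h j)" by (rule member_le_sum) (auto simp: hnn)
    then show ?thesis using hs by simp
  qed
  have tm: "(h j)\<^sup>2 * s j \<le> h j * s i" for j
  proof -
    have "h j * (h j * s j) \<le> 1 * (h j * s j)"
      by (rule mult_right_mono) (auto simp: hle hnn spos less_imp_le)
    moreover have "h j * s j \<le> h j * s i" by (rule mult_left_mono) (auto simp: hnn smax)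
    ultimately show ?thesis by (simp add: power2_eq_square mult.assoc)
  qed
  have tot: "(\<Sum>j\<in>UNIV. h j * s i) = s i" using hs by (simp add: sum_distrib_right[symmetric])
  show le: "(\<Sum>j\<in>UNIV. (h j)\<^sup>2 * s j) \<le> s i"
    using sum_mono[of UNIV "\<lambda>j. (h j)\<^sup>2 * s j" "\<lambda>j. h j * s i"] tm tot by simp
  show "(\<Sum>j\<in>UNIV. (h j)\<^sup>2 * s j) \<ge> s i \<longleftrightarrow> ((\<exists>!j. j \<in> R) \<and> (\<forall>j. j \<in> R \<longrightarrow> s i = s j))"
  proof
    assume ge: "(\<Sum>j\<in>UNIV. (h j)\<^sup>2 * s j) \<ge> s i"
    have "(\<Sum>j\<in>UNIV. h j * s i - (h j)\<^sup>2 * s j) = 0"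
      using ge le tot by (simp add: sum_subtractf)
    then have eq0: "h j * s i - (h j)\<^sup>2 * s j = 0" for j
      using sum_nonneg_eq_0_iff[of UNIV "\<lambda>j. h j * s i - (h j)\<^sup>2 * s j"] tm by simp
    have inR: "h j = 1 \<and> s i = s j" if "j \<in> R" for j
    proof -
      have hp: "h j > 0" using hR that by simp
      have "h j * (s i - h j * s j) = 0" using eq0[of j] by (simp add: algebra_simps power2_eq_square)
      then have e: "h j * s j = s i" using hp by simp
      have "h j * s j \<le> s j" using hle[of j] spos by (simp add: less_imp_le mult_left_le_one_le)
      then have "s i = s j" using e smax[rule_format, of j] by linarith
      then show ?thesis using e spos by (metis mult_cancel_right2 order_less_irrefl)
    qed
    have ex: "\<exists>j. j \<in> R"
    proof (rule ccontr)
      assume "\<not> (\<exists>j. j \<in> R)"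
      then have "h j = 0" for j using hR hnn by (metis less_eq_real_def)
      then show False using hs by simp
    qed
    have un: "j1 = j2" if "j1 \<in> R" "j2 \<in> R" for j1 j2
    proof (rule ccontr)
      assume ne: "j1 \<noteq> j2"
      have "(\<Sum>j\<in>{j1, j2}. h j) \<le> (\<Sum>j\<in>UNIV. h j)"
        by (rule sum_mono2) (auto simp: hnn)
      then show False using ne inR[OF that(1)] inR[OF that(2)] hs by simp
    qed
    show "(\<exists>!j. j \<in> R) \<and> (\<forall>j. j \<in> R \<longrightarrow> s i = s j)"
      using ex un inR by blast
  next
    assume r: "(\<exists>!j. j \<in> R) \<and> (\<forall>j. j \<in> R \<longrightarrow> s i = s j)"
    then obtain j0 where j0: "j0 \<in> R" "\<And>j. j \<in> R \<Longrightarrow> j = j0" by blast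
    have z: "h j = 0" if "j \<noteq> j0" for j
      using hR hnn j0(2) that by (metis less_eq_real_def)
    have "(\<Sum>j\<in>UNIV. h j) = (\<Sum>j\<in>UNIV. if j = j0 then h j0 else 0)"
      by (intro sum.cong) (auto simp: z)
    then have h1: "h j0 = 1" using hs by simp
    have "(\<Sum>j\<in>UNIV. (h j)\<^sup>2 * s j) = (\<Sum>j\<in>UNIV. if j = j0 then (h j0)\<^sup>2 * s j0 else 0)"
      by (intro sum.cong) (auto simp: z)
    also have "\<dots> = s i" using h1 r j0(1) by simp
    finally show "(\<Sum>j\<in>UNIV. (h j)\<^sup>2 * s j) \<ge> s i" by simp
  qed
qed



theorem proposition5:
  fixes P :: "real^'n^'n" and sigma2 :: "real^'n" and i :: 'n and z :: "real^'n"
  assumes n2: "CARD('n) \<ge> 2"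
    and stoch: "row_stochastic P"
    and irred: "irreducible_mat P"
    and aper: "aperiodic_mat P"
    and sig_pos: "\<forall>j. sigma2 $ j > 0"
    and sig_max: "\<forall>j. sigma2 $ i \<ge> sigma2 $ j"
    and z_range: "\<forall>j. j \<noteq> i \<longrightarrow> 0 \<le> z $ j \<and> z $ j \<le> 1"
    and S_ne: "stubborn_set i z \<noteq> {}"
  shows "(1 \<in> best_response P sigma2 i z
           \<longleftrightarrow> best_response P sigma2 i z = {0..1})
       \<and> (best_response P sigma2 i z = {0..1}
           \<longleftrightarrow> (\<forall>zi. 0 \<le> zi \<and> zi < 1 \<longrightarrow>
                (\<exists>!j. j \<in> stubborn_set i z \<and> (i, j) \<in> (graph_of (Wm P (vupd z i zi)))\<^sup>*)
              \<and> (\<forall>j. j \<in> stubborn_set i z \<and> (i, j) \<in> (graph_of (Wm P (vupd z i zi)))\<^sup>*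
                     \<longrightarrow> sigma2 $ i = sigma2 $ j)))"
proof -
  define c where "c x = cost P sigma2 i (vupd z i x)" for x
  define iii where "iii zi = ((\<exists>!j. j \<in> stubborn_set i z \<and> (i, j) \<in> (graph_of (Wm P (vupd z i zi)))\<^sup>*)
              \<and> (\<forall>j. j \<in> stubborn_set i z \<and> (i, j) \<in> (graph_of (Wm P (vupd z i zi)))\<^sup>*
                     \<longrightarrow> sigma2 $ i = sigma2 $ j))" for zi
  have vi: "vupd z i x $ k = (if k = i then x else z $ k)" for x k by (simp add: vupd_def)
  have zr: "\<forall>k. 0 \<le> vupd z i x $ k \<and> vupd z i x $ k \<le> 1" if "0 \<le> x" "x \<le> 1" for x
    using that z_range by (simp add: vi)
  have ne: "{k. vupd z i x $ k = 1} \<noteq> {}" for x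
    using S_ne by (auto simp: stubborn_set_def vi)
  note HP = Hm_props[OF stoch irred zr ne]
  have c1: "c 1 = sigma2 $ i"
  proof -
    have r: "Hm P (vupd z i 1) $ i $ k = (if k = i then 1 else 0)" for k
      using HP[of 1] by (simp add: vi)
    have "c 1 = (\<Sum>k\<in>UNIV. if k = i then sigma2 $ i else 0)"
      unfolding c_def cost_def by (intro sum.cong) (auto simp: r)
    then show ?thesis by simp
  qed
  have quadx: "c x \<le> sigma2 $ i \<and> (c x \<ge> sigma2 $ i \<longleftrightarrow> iii x)" if x: "0 \<le> x" "x < 1" for x
  proof -
    let ?h = "\<lambda>j. Hm P (vupd z i x) $ i $ j"
    let ?R = "{j. j \<in> stubborn_set i z \<and> (i, j) \<in> (graph_of (Wm P (vupd z i x)))\<^sup>*}"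
    have H: "(\<forall>k l. 0 \<le> Hm P (vupd z i x) $ k $ l) \<and> (\<forall>k. (\<Sum>l\<in>UNIV. Hm P (vupd z i x) $ k $ l) = 1)
     \<and> (\<forall>k l. vupd z i x $ l \<noteq> 1 \<longrightarrow> Hm P (vupd z i x) $ k $ l = 0)
     \<and> (\<forall>k a. vupd z i x $ a = 1 \<longrightarrow> (Hm P (vupd z i x) $ k $ a > 0 \<longleftrightarrow> (k, a) \<in> (graph_of (Wm P (vupd z i x)))\<^sup>*))"
      using HP[of x] x by simp
    have S: "vupd z i x $ j = 1 \<longleftrightarrow> j \<in> stubborn_set i z" for j
      using x by (auto simp: vi stubborn_set_def)
    have hR: "\<forall>j. ?h j > 0 \<longleftrightarrow> j \<in> ?R"
    proof
      fix j
      show "?h j > 0 \<longleftrightarrow> j \<in> ?R"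
      proof (cases "j \<in> stubborn_set i z")
        case True
        then show ?thesis using H S by auto
      next
        case False
        then show ?thesis using H S by auto
      qed
    qed
    have q1: "(\<Sum>j\<in>UNIV. (?h j)\<^sup>2 * sigma2 $ j) \<le> sigma2 $ i"
      by (rule quad(1)[of ?h ?R "\<lambda>j. sigma2 $ j" i]) (use H hR sig_pos sig_max in auto)
    have q2: "(\<Sum>j\<in>UNIV. (?h j)\<^sup>2 * sigma2 $ j) \<ge> sigma2 $ i \<longleftrightarrow> ((\<exists>!j. j \<in> ?R) \<and> (\<forall>j. j \<in> ?R \<longrightarrow> sigma2 $ i = sigma2 $ j))"
      by (rule quad(2)[of ?h ?R "\<lambda>j. sigma2 $ j" i]) (use H hR sig_pos sig_max in auto)
    show ?thesis using q1 q2 unfolding c_def cost_def iii_def by simp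
  qed
  have cle: "c x \<le> sigma2 $ i" if "x \<in> {0..1}" for x
    using that quadx[of x] c1 by (cases "x = 1") auto
  have B: "best_response P sigma2 i z = {x\<in>{0..1}. \<forall>y\<in>{0..1}. c x \<le> c y}"
    by (simp add: best_response_def c_def)
  have p1: "1 \<in> best_response P sigma2 i z \<longleftrightarrow> best_response P sigma2 i z = {0..1}"
  proof
    assume "1 \<in> best_response P sigma2 i z"
    then have "\<forall>y\<in>{0..1}. sigma2 $ i \<le> c y" using B c1 by auto
    then show "best_response P sigma2 i z = {0..1}" unfolding B using cle by fastforce
  qed auto
  have p2: "best_response P sigma2 i z = {0..1} \<longleftrightarrow> (\<forall>zi. 0 \<le> zi \<and> zi < 1 \<longrightarrow> iii zi)"
  proof
    assume "best_response P sigma2 i z = {0..1}"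
    then have "1 \<in> best_response P sigma2 i z" by simp
    then have "\<forall>y\<in>{0..1}. sigma2 $ i \<le> c y" using B c1 by auto
    then show "\<forall>zi. 0 \<le> zi \<and> zi < 1 \<longrightarrow> iii zi" using quadx by auto
  next
    assume a: "\<forall>zi. 0 \<le> zi \<and> zi < 1 \<longrightarrow> iii zi"
    have "c x = sigma2 $ i" if "x \<in> {0..1}" for x
      using that quadx[of x] c1 a by (cases "x = 1") force+
    then show "best_response P sigma2 i z = {0..1}" unfolding B by auto
  qed
  show ?thesis using p1 p2 unfolding iii_def by blast
qed


end
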